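(* Let $\mathfrak{g}$ be a basic Lie superalgebra with $\mathfrak{g}\ne\mathfrak{psl}(n|n)$, or $\mathfrak{g}=\mathfrak{gl}(m|n)$. Let $\mathfrak{g}=\bigoplus_j\mathfrak{g}(j)$ be a good $\mathbb{Z}$-grading for $e\in\mathfrak{g}_{\bar0}(2)$ (with $\mathfrak{Z}(\mathfrak{g}_{\bar0})\subset\mathfrak{g}(0)$ when $\mathfrak{g}=\mathfrak{gl}(m|n)$), defined by $\mathrm{ad}\,H$ with $H\in\mathfrak{g}_{\bar0}(0)$, i.e. $[H,x]=jx$ for $x\in\mathfrak{g}(j)$. If $\mathfrak{s}=\{e,f,h\}$ is an $\mathfrak{sl}_2$-triple with $f\in\mathfrak{g}'_{\bar0}(-2)$ and $h\in\mathfrak{g}'_{\bar0}(0)$, then $z:=H-h$ lies in the even part of the center of $\mathfrak{g}^{\mathfrak s}$, i.e. $z\in\mathfrak{Z}(\mathfrak{g}^{\mathfrak s})_{\bar0}$. In particular, if $\mathfrak{Z}(\mathfrak{g}^{\mathfrak s})_{\bar0}=0$, then the Dynkin grading (eigenspaces of $\mathrm{ad}\,h$) is the only good $\mathbb{Z}$-grading for which $e$ is a good element.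
   Context: Basic Lie superalgebra: finite-dimensional simple $\mathfrak{g}=\mathfrak{g}_{\bar0}\oplus\mathfrak{g}_{\bar1}$ with $\mathfrak{g}_{\bar0}$ reductive and an even nondegenerate invariant bilinear form. $\mathfrak{g}'_{\bar0}=[\mathfrak{g}_{\bar0},\mathfrak{g}_{\bar0}]$, $\mathfrak{g}'_{\bar0}(j)=\mathfrak{g}'_{\bar0}\cap\mathfrak{g}(j)$. Good grading/good element: $e\in\mathfrak{g}_{\bar0}(2)$ with $\mathrm{ad}\,e:\mathfrak{g}(j)\to\mathfrak{g}(j+2)$ injective for $j\le-1$, surjective for $j\ge-1$. $\mathfrak{sl}_2$-triple: $[e,f]=h,[h,e]=2e,[h,f]=-2f$. $\mathfrak{g}^{\mathfrak s}$ is the common centralizer of $e,f,h$ and $\mathfrak{Z}(\mathfrak{g}^{\mathfrak s})$ its center. *)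

theory Defs
  imports Complex_Main
begin

text \<open>A superalgebra structure is given by a complex vector space structure
  (scalar multiplication sc on the carrier type 'a, which is the whole algebra g),
  a bracket br, and the even and odd parts G0, G1.\<close>

definition homog :: "'a set \<Rightarrow> 'a set \<Rightarrow> 'a \<Rightarrow> bool" where
  "homog G0 G1 x \<longleftrightarrow> x \<in> G0 \<or> x \<in> G1"

definition ssign :: "'a set \<Rightarrow> 'a \<Rightarrow> 'a \<Rightarrow> complex" where
  "ssign G1 x y = (if x \<in> G1 \<and> y \<in> G1 then -1 else 1)"

definition bracket_bilinear :: "(complex \<Rightarrow> 'a::ab_group_add \<Rightarrow> 'a) \<Rightarrow> ('a \<Rightarrow> 'a \<Rightarrow> 'a) \<Rightarrow> bool" where
  "bracket_bilinear sc br \<longleftrightarrow>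
     (\<forall>x y z. br (x + y) z = br x z + br y z) \<and>
     (\<forall>x y z. br x (y + z) = br x y + br x z) \<and>
     (\<forall>c x y. br (sc c x) y = sc c (br x y)) \<and>
     (\<forall>c x y. br x (sc c y) = sc c (br x y))"

definition lie_superalgebra ::
  "(complex \<Rightarrow> 'a::ab_group_add \<Rightarrow> 'a) \<Rightarrow> ('a \<Rightarrow> 'a \<Rightarrow> 'a) \<Rightarrow> 'a set \<Rightarrow> 'a set \<Rightarrow> bool" where
  "lie_superalgebra sc br G0 G1 \<longleftrightarrow>
     vector_space sc \<and>
     (\<exists>B. finite B \<and> module.span sc B = UNIV) \<and>
     module.subspace sc G0 \<and> module.subspace sc G1 \<and>
     G0 \<inter> G1 = {0} \<and> (\<forall>x. \<exists>a\<in>G0. \<exists>b\<in>G1. x = a + b) \<and>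
     bracket_bilinear sc br \<and>
     (\<forall>x\<in>G0. \<forall>y\<in>G0. br x y \<in> G0) \<and> (\<forall>x\<in>G0. \<forall>y\<in>G1. br x y \<in> G1) \<and>
     (\<forall>x\<in>G1. \<forall>y\<in>G0. br x y \<in> G1) \<and> (\<forall>x\<in>G1. \<forall>y\<in>G1. br x y \<in> G0) \<and>
     (\<forall>x y. homog G0 G1 x \<longrightarrow> homog G0 G1 y \<longrightarrow>
        br x y = - sc (ssign G1 x y) (br y x)) \<and>
     (\<forall>x y z. homog G0 G1 x \<longrightarrow> homog G0 G1 y \<longrightarrow> homog G0 G1 z \<longrightarrow>
        br x (br y z) = br (br x y) z + sc (ssign G1 x y) (br y (br x z)))"

definition graded_ideal ::
  "(complex \<Rightarrow> 'a::ab_group_add \<Rightarrow> 'a) \<Rightarrow> ('a \<Rightarrow> 'a \<Rightarrow> 'a) \<Rightarrow> 'a set \<Rightarrow> 'a set \<Rightarrow> 'a set \<Rightarrow> bool" where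
  "graded_ideal sc br G0 G1 I \<longleftrightarrow>
     module.subspace sc I \<and> (\<forall>x. \<forall>y\<in>I. br x y \<in> I) \<and>
     (\<forall>y\<in>I. \<exists>a\<in>I \<inter> G0. \<exists>b\<in>I \<inter> G1. y = a + b)"

definition simple_lsa ::
  "(complex \<Rightarrow> 'a::ab_group_add \<Rightarrow> 'a) \<Rightarrow> ('a \<Rightarrow> 'a \<Rightarrow> 'a) \<Rightarrow> 'a set \<Rightarrow> 'a set \<Rightarrow> bool" where
  "simple_lsa sc br G0 G1 \<longleftrightarrow>
     (\<exists>x y. br x y \<noteq> 0) \<and>
     (\<forall>I. graded_ideal sc br G0 G1 I \<longrightarrow> I = {0} \<or> I = UNIV)"

definition even_ideal ::
  "(complex \<Rightarrow> 'a::ab_group_add \<Rightarrow> 'a) \<Rightarrow> ('a \<Rightarrow> 'a \<Rightarrow> 'a) \<Rightarrow> 'a set \<Rightarrow> 'a set \<Rightarrow> bool" where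
  "even_ideal sc br G0 I \<longleftrightarrow> module.subspace sc I \<and> I \<subseteq> G0 \<and> (\<forall>x\<in>G0. \<forall>y\<in>I. br x y \<in> I)"

primrec derived_series ::
  "(complex \<Rightarrow> 'a::ab_group_add \<Rightarrow> 'a) \<Rightarrow> ('a \<Rightarrow> 'a \<Rightarrow> 'a) \<Rightarrow> 'a set \<Rightarrow> nat \<Rightarrow> 'a set" where
  "derived_series sc br S 0 = S"
| "derived_series sc br S (Suc k) =
     module.span sc {br x y | x y. x \<in> derived_series sc br S k \<and> y \<in> derived_series sc br S k}"

definition solvable_sub ::
  "(complex \<Rightarrow> 'a::ab_group_add \<Rightarrow> 'a) \<Rightarrow> ('a \<Rightarrow> 'a \<Rightarrow> 'a) \<Rightarrow> 'a set \<Rightarrow> bool" where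
  "solvable_sub sc br S \<longleftrightarrow> (\<exists>k. derived_series sc br S k = {0})"

definition center_even :: "('a \<Rightarrow> 'a \<Rightarrow> 'a::zero) \<Rightarrow> 'a set \<Rightarrow> 'a set" where
  "center_even br G0 = {x \<in> G0. \<forall>y\<in>G0. br x y = 0}"

text \<open>g0 reductive: its radical (largest solvable ideal) equals its centre, i.e.
  every solvable ideal of g0 is central (the centre is itself a solvable ideal).\<close>
definition reductive_even ::
  "(complex \<Rightarrow> 'a::ab_group_add \<Rightarrow> 'a) \<Rightarrow> ('a \<Rightarrow> 'a \<Rightarrow> 'a) \<Rightarrow> 'a set \<Rightarrow> bool" where
  "reductive_even sc br G0 \<longleftrightarrow>
     (\<forall>I. even_ideal sc br G0 I \<and> solvable_sub sc br I \<longrightarrow> I \<subseteq> center_even br G0)"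

definition even_nondeg_invariant_form ::
  "(complex \<Rightarrow> 'a::ab_group_add \<Rightarrow> 'a) \<Rightarrow> ('a \<Rightarrow> 'a \<Rightarrow> 'a) \<Rightarrow> 'a set \<Rightarrow> 'a set
   \<Rightarrow> ('a \<Rightarrow> 'a \<Rightarrow> complex) \<Rightarrow> bool" where
  "even_nondeg_invariant_form sc br G0 G1 B \<longleftrightarrow>
     (\<forall>x y z. B (x + y) z = B x z + B y z) \<and>
     (\<forall>x y z. B x (y + z) = B x y + B x z) \<and>
     (\<forall>c x y. B (sc c x) y = c * B x y) \<and>
     (\<forall>c x y. B x (sc c y) = c * B x y) \<and>
     (\<forall>x\<in>G0. \<forall>y\<in>G1. B x y = 0 \<and> B y x = 0) \<and>
     (\<forall>x y z. B (br x y) z = B x (br y z)) \<and>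
     (\<forall>x. (\<forall>y. B x y = 0) \<longrightarrow> x = 0)"

definition basic_lsa ::
  "(complex \<Rightarrow> 'a::ab_group_add \<Rightarrow> 'a) \<Rightarrow> ('a \<Rightarrow> 'a \<Rightarrow> 'a) \<Rightarrow> 'a set \<Rightarrow> 'a set \<Rightarrow> bool" where
  "basic_lsa sc br G0 G1 \<longleftrightarrow>
     lie_superalgebra sc br G0 G1 \<and> simple_lsa sc br G0 G1 \<and> reductive_even sc br G0 \<and>
     (\<exists>B. even_nondeg_invariant_form sc br G0 G1 B)"

text \<open>(m+n) x (m+n) complex matrices, indices 0..m+n-1, zero outside; the
  first m indices are even, the last n odd.\<close>
definition mat_space :: "nat \<Rightarrow> nat \<Rightarrow> (nat \<Rightarrow> nat \<Rightarrow> complex) set" where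
  "mat_space m n = {X. \<forall>i j. (m + n \<le> i \<or> m + n \<le> j) \<longrightarrow> X i j = 0}"

definition mmul :: "nat \<Rightarrow> (nat \<Rightarrow> nat \<Rightarrow> complex) \<Rightarrow> (nat \<Rightarrow> nat \<Rightarrow> complex) \<Rightarrow> (nat \<Rightarrow> nat \<Rightarrow> complex)" where
  "mmul N X Y = (\<lambda>i j. \<Sum>k<N. X i k * Y k j)"

definition mev :: "nat \<Rightarrow> (nat \<Rightarrow> nat \<Rightarrow> complex) \<Rightarrow> (nat \<Rightarrow> nat \<Rightarrow> complex)" where
  "mev m X = (\<lambda>i j. if (i < m) = (j < m) then X i j else 0)"

definition modd :: "nat \<Rightarrow> (nat \<Rightarrow> nat \<Rightarrow> complex) \<Rightarrow> (nat \<Rightarrow> nat \<Rightarrow> complex)" where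
  "modd m X = (\<lambda>i j. if (i < m) = (j < m) then 0 else X i j)"

text \<open>Supercommutator, extended bilinearly:
  [X,Y] = XY - (Y0 X + Y1 X0 - Y1 X1).\<close>
definition msbr :: "nat \<Rightarrow> nat \<Rightarrow> (nat \<Rightarrow> nat \<Rightarrow> complex) \<Rightarrow> (nat \<Rightarrow> nat \<Rightarrow> complex) \<Rightarrow> (nat \<Rightarrow> nat \<Rightarrow> complex)" where
  "msbr m n X Y = (\<lambda>i j. mmul (m+n) X Y i j - mmul (m+n) (mev m Y) X i j
       - mmul (m+n) (modd m Y) (mev m X) i j + mmul (m+n) (modd m Y) (modd m X) i j)"

definition supertrace :: "nat \<Rightarrow> nat \<Rightarrow> (nat \<Rightarrow> nat \<Rightarrow> complex) \<Rightarrow> complex" where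
  "supertrace m n X = (\<Sum>i<m. X i i) - (\<Sum>i\<in>{m..<m+n}. X i i)"

definition sl_space :: "nat \<Rightarrow> nat \<Rightarrow> (nat \<Rightarrow> nat \<Rightarrow> complex) set" where
  "sl_space m n = {X \<in> mat_space m n. supertrace m n X = 0}"

definition lsa_hom_from_mat ::
  "(complex \<Rightarrow> 'a::ab_group_add \<Rightarrow> 'a) \<Rightarrow> ('a \<Rightarrow> 'a \<Rightarrow> 'a) \<Rightarrow> 'a set \<Rightarrow> 'a set
   \<Rightarrow> nat \<Rightarrow> nat \<Rightarrow> (nat \<Rightarrow> nat \<Rightarrow> complex) set \<Rightarrow> ((nat \<Rightarrow> nat \<Rightarrow> complex) \<Rightarrow> 'a) \<Rightarrow> bool" where
  "lsa_hom_from_mat sc br G0 G1 m n M \<phi> \<longleftrightarrow>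
     (\<forall>X\<in>M. \<forall>Y\<in>M. \<phi> (\<lambda>i j. X i j + Y i j) = \<phi> X + \<phi> Y) \<and>
     (\<forall>c. \<forall>X\<in>M. \<phi> (\<lambda>i j. c * X i j) = sc c (\<phi> X)) \<and>
     (\<forall>X\<in>M. \<forall>Y\<in>M. \<phi> (msbr m n X Y) = br (\<phi> X) (\<phi> Y)) \<and>
     (\<forall>X\<in>M. mev m X = X \<longrightarrow> \<phi> X \<in> G0) \<and>
     (\<forall>X\<in>M. modd m X = X \<longrightarrow> \<phi> X \<in> G1)"

definition iso_gl ::
  "(complex \<Rightarrow> 'a::ab_group_add \<Rightarrow> 'a) \<Rightarrow> ('a \<Rightarrow> 'a \<Rightarrow> 'a) \<Rightarrow> 'a set \<Rightarrow> 'a set \<Rightarrow> nat \<Rightarrow> nat \<Rightarrow> bool" where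
  "iso_gl sc br G0 G1 m n \<longleftrightarrow>
     (\<exists>\<phi>. bij_betw \<phi> (mat_space m n) UNIV \<and> lsa_hom_from_mat sc br G0 G1 m n (mat_space m n) \<phi>)"

text \<open>g is isomorphic to psl(n|n) = sl(n|n)/CI: there is a surjective homomorphism
  sl(n|n) -> g whose kernel is the scalar matrices.\<close>
definition iso_psl ::
  "(complex \<Rightarrow> 'a::ab_group_add \<Rightarrow> 'a) \<Rightarrow> ('a \<Rightarrow> 'a \<Rightarrow> 'a) \<Rightarrow> 'a set \<Rightarrow> 'a set \<Rightarrow> nat \<Rightarrow> bool" where
  "iso_psl sc br G0 G1 n \<longleftrightarrow>
     (\<exists>\<phi>. \<phi> ` sl_space n n = UNIV \<and> lsa_hom_from_mat sc br G0 G1 n n (sl_space n n) \<phi> \<and>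
        (\<forall>X\<in>sl_space n n. \<phi> X = 0 \<longleftrightarrow> (\<exists>c. X = (\<lambda>i j. if i = j \<and> i < n + n then c else 0))))"

definition grade_sp :: "(complex \<Rightarrow> 'a \<Rightarrow> 'a) \<Rightarrow> ('a \<Rightarrow> 'a \<Rightarrow> 'a) \<Rightarrow> 'a \<Rightarrow> int \<Rightarrow> 'a set" where
  "grade_sp sc br H j = {x. br H x = sc (of_int j) x}"

definition Z_grading_by ::
  "(complex \<Rightarrow> 'a::ab_group_add \<Rightarrow> 'a) \<Rightarrow> ('a \<Rightarrow> 'a \<Rightarrow> 'a) \<Rightarrow> 'a set \<Rightarrow> 'a \<Rightarrow> bool" where
  "Z_grading_by sc br G0 H \<longleftrightarrow>
     H \<in> G0 \<and> H \<in> grade_sp sc br H 0 \<and>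
     module.span sc (\<Union>j. grade_sp sc br H j) = UNIV"

definition good_element ::
  "(complex \<Rightarrow> 'a::ab_group_add \<Rightarrow> 'a) \<Rightarrow> ('a \<Rightarrow> 'a \<Rightarrow> 'a) \<Rightarrow> 'a set \<Rightarrow> 'a \<Rightarrow> 'a \<Rightarrow> bool" where
  "good_element sc br G0 H e \<longleftrightarrow>
     e \<in> G0 \<and> e \<in> grade_sp sc br H 2 \<and>
     (\<forall>j\<le>-1. inj_on (br e) (grade_sp sc br H j)) \<and>
     (\<forall>j\<ge>-1. br e ` grade_sp sc br H j = grade_sp sc br H (j + 2))"

definition derived_even :: "(complex \<Rightarrow> 'a::ab_group_add \<Rightarrow> 'a) \<Rightarrow> ('a \<Rightarrow> 'a \<Rightarrow> 'a) \<Rightarrow> 'a set \<Rightarrow> 'a set" where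
  "derived_even sc br G0 = module.span sc {br x y | x y. x \<in> G0 \<and> y \<in> G0}"

definition sl2_triple :: "(complex \<Rightarrow> 'a \<Rightarrow> 'a) \<Rightarrow> ('a \<Rightarrow> 'a \<Rightarrow> 'a) \<Rightarrow> 'a \<Rightarrow> 'a \<Rightarrow> 'a \<Rightarrow> bool" where
  "sl2_triple sc br e f h \<longleftrightarrow> br e f = h \<and> br h e = sc 2 e \<and> br h f = sc (-2) f"

definition centralizer_s :: "('a \<Rightarrow> 'a \<Rightarrow> 'a::zero) \<Rightarrow> 'a \<Rightarrow> 'a \<Rightarrow> 'a \<Rightarrow> 'a set" where
  "centralizer_s br e f h = {x. br x e = 0 \<and> br x f = 0 \<and> br x h = 0}"

definition center_of :: "('a \<Rightarrow> 'a \<Rightarrow> 'a::zero) \<Rightarrow> 'a set \<Rightarrow> 'a set" where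
  "center_of br S = {x \<in> S. \<forall>y\<in>S. br x y = 0}"

end

theory Submission
  imports Defs
begin

locale LS = vector_space sc for sc :: "complex \<Rightarrow> 'a::ab_group_add \<Rightarrow> 'a" +
  fixes br :: "'a \<Rightarrow> 'a \<Rightarrow> 'a" and G0 G1 :: "'a set" and H e f h :: 'a
  assumes lsa: "lie_superalgebra sc br G0 G1"
    and grading: "Z_grading_by sc br G0 H"
    and good: "good_element sc br G0 H e"
    and triple: "sl2_triple sc br e f h"
    and f_in: "f \<in> derived_even sc br G0 \<inter> grade_sp sc br H (-2)"
    and h_in: "h \<in> derived_even sc br G0 \<inter> grade_sp sc br H 0"
begin

abbreviation gr :: "int \<Rightarrow> 'a set" where "gr j \<equiv> grade_sp sc br H j"

lemma bil: "bracket_bilinear sc br" using lsa unfolding lie_superalgebra_def by blast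

lemma br_addL: "br (x + y) z = br x z + br y z" using bil unfolding bracket_bilinear_def by blast
lemma br_addR: "br x (y + z) = br x y + br x z" using bil unfolding bracket_bilinear_def by blast
lemma br_scL: "br (sc c x) y = sc c (br x y)" using bil unfolding bracket_bilinear_def by blast
lemma br_scR: "br x (sc c y) = sc c (br x y)" using bil unfolding bracket_bilinear_def by blast

lemma br_0L[simp]: "br 0 z = 0"
  using br_addL[of 0 0 z] by simp
lemma br_0R[simp]: "br z 0 = 0"
  using br_addR[of z 0 0] by simp
lemma br_diffL: "br (x - y) z = br x z - br y z"
  using br_addL[of "x - y" y z] by (simp add: eq_diff_eq)
lemma br_diffR: "br z (x - y) = br z x - br z y"
  using br_addR[of z "x - y" y] by (simp add: eq_diff_eq)
lemma br_negL[simp]: "br (- x) z = - br x z"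
  using br_diffL[of 0 x z] by simp
lemma br_negR[simp]: "br z (- x) = - br z x"
  using br_diffR[of z 0 x] by simp
lemma br_sumR: "br x (sum g A) = (\<Sum>a\<in>A. br x (g a))"
  by (induction A rule: infinite_finite_induct) (simp_all add: br_addR)

lemma sub0: "subspace G0" using lsa unfolding lie_superalgebra_def by blast
lemma sub1: "subspace G1" using lsa unfolding lie_superalgebra_def by blast
lemma int01: "G0 \<inter> G1 = {0}" using lsa unfolding lie_superalgebra_def by blast
lemma dec: "\<exists>a\<in>G0. \<exists>b\<in>G1. x = a + b" using lsa unfolding lie_superalgebra_def by blast
lemma closed00: "x \<in> G0 \<Longrightarrow> y \<in> G0 \<Longrightarrow> br x y \<in> G0" using lsa unfolding lie_superalgebra_def by blast
lemma anti_ax: "homog G0 G1 x \<Longrightarrow> homog G0 G1 y \<Longrightarrow> br x y = - sc (ssign G1 x y) (br y x)"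
  using lsa unfolding lie_superalgebra_def by blast
lemma jac_ax: "homog G0 G1 x \<Longrightarrow> homog G0 G1 y \<Longrightarrow> homog G0 G1 z \<Longrightarrow>
        br x (br y z) = br (br x y) z + sc (ssign G1 x y) (br y (br x z))"
  using lsa unfolding lie_superalgebra_def by blast

lemma even_notodd: "u \<in> G0 \<Longrightarrow> u \<noteq> 0 \<Longrightarrow> u \<notin> G1" using int01 by blast

lemma anti: assumes u: "u \<in> G0" shows "br u y = - br y u"
proof (cases "u = 0")
  case True then show ?thesis by simp
next
  case False
  obtain a b where a: "a \<in> G0" and b: "b \<in> G1" and y: "y = a + b" using dec by blast
  have s1: "ssign G1 u a = 1" "ssign G1 u b = 1" using even_notodd[OF u False]
    by (auto simp: ssign_def)
  have "br u a = - br a u" using anti_ax[of u a] u a s1 by (simp add: homog_def)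
  moreover have "br u b = - br b u" using anti_ax[of u b] u b s1 by (simp add: homog_def)
  ultimately show ?thesis by (simp add: y br_addL br_addR)
qed

lemma jac: assumes x: "x \<in> G0" and y: "y \<in> G0"
  shows "br x (br y z) = br (br x y) z + br y (br x z)"
proof (cases "x = 0 \<or> y = 0")
  case True then show ?thesis by auto
next
  case False
  then have s: "ssign G1 x y = 1" using even_notodd x by (auto simp: ssign_def)
  obtain a b where a: "a \<in> G0" and b: "b \<in> G1" and z: "z = a + b" using dec by blast
  have "br x (br y a) = br (br x y) a + br y (br x a)" using jac_ax[of x y a] x y a s by (simp add: homog_def)
  moreover have "br x (br y b) = br (br x y) b + br y (br x b)" using jac_ax[of x y b] x y b s by (simp add: homog_def)
  ultimately show ?thesis by (simp add: z br_addR algebra_simps)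
qed

lemma derived_sub: "derived_even sc br G0 \<subseteq> G0"
  unfolding derived_even_def using sub0 closed00 by (intro span_minimal) auto

lemma H0: "H \<in> G0" using grading unfolding Z_grading_by_def by blast
lemma e0: "e \<in> G0" using good unfolding good_element_def by blast
lemma f0: "f \<in> G0" using f_in derived_sub by blast
lemma h0: "h \<in> G0" using h_in derived_sub by blast
lemma He: "br H e = sc 2 e" using good unfolding good_element_def grade_sp_def by simp
lemma Hf: "br H f = sc (-2) f" using f_in unfolding grade_sp_def by simp
lemma Hh: "br H h = 0" using h_in unfolding grade_sp_def by simp
lemma ef: "br e f = h" using triple unfolding sl2_triple_def by blast
lemma he: "br h e = sc 2 e" using triple unfolding sl2_triple_def by blast
lemma hf: "br h f = sc (-2) f" using triple unfolding sl2_triple_def by blast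

lemma gr_iff: "x \<in> gr j \<longleftrightarrow> br H x = sc (of_int j) x" unfolding grade_sp_def by simp

lemma sub_gr: "subspace (gr j)"
  by (rule subspaceI) (auto simp: gr_iff br_addR br_scR scale_right_distrib)

lemma E_gr: "v \<in> gr j \<Longrightarrow> br e v \<in> gr (j + 2)"
  using jac[OF H0 e0, of v] by (simp add: gr_iff He br_scL br_scR scale_left_distrib)
lemma F_gr: "v \<in> gr j \<Longrightarrow> br f v \<in> gr (j - 2)"
  using jac[OF H0 f0, of v] by (simp add: gr_iff Hf br_scL br_scR scale_left_diff_distrib)
lemma Hh_gr: "v \<in> gr j \<Longrightarrow> br h v \<in> gr j"
  using jac[OF H0 h0, of v] by (simp add: gr_iff Hh br_scR)

lemma EF: "br e (br f v) = br h v + br f (br e v)"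
  using jac[OF e0 f0, of v] by (simp add: ef)
lemma HhF: "br h (br f v) = sc (-2) (br f v) + br f (br h v)"
  using jac[OF h0 f0, of v] by (simp add: hf br_scL)
lemma HhE: "br h (br e v) = sc 2 (br e v) + br e (br h v)"
  using jac[OF h0 e0, of v] by (simp add: he br_scL)

lemma indepA:
  assumes "finite J"
  shows "inj_on \<phi> J \<Longrightarrow> (\<forall>j\<in>J. x j \<in> gr (\<phi> j)) \<Longrightarrow> sum x J = 0 \<Longrightarrow> \<forall>j\<in>J. x j = 0"
  using assms
proof (induction J arbitrary: x rule: finite_induct)
  case empty then show ?case by simp
next
  case (insert j0 J)
  have sum0: "x j0 + sum x J = 0" using insert by simp
  have "br H (x j0 + sum x J) = 0" using sum0 by simp
  then have s1: "sc (of_int (\<phi> j0)) (x j0) + (\<Sum>j\<in>J. sc (of_int (\<phi> j)) (x j)) = 0"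
    using insert.prems by (simp add: br_addR br_sumR gr_iff)
  have s2: "sc (of_int (\<phi> j0)) (x j0) + (\<Sum>j\<in>J. sc (of_int (\<phi> j0)) (x j)) = 0"
    using arg_cong[OF sum0, of "sc (of_int (\<phi> j0))"] by (simp add: scale_right_distrib scale_sum_right)
  define y where "y j = sc (of_int (\<phi> j - \<phi> j0)) (x j)" for j
  have "(\<Sum>j\<in>J. y j) = (\<Sum>j\<in>J. sc (of_int (\<phi> j)) (x j)) - (\<Sum>j\<in>J. sc (of_int (\<phi> j0)) (x j))"
    by (simp add: y_def scale_left_diff_distrib sum_subtractf)
  also have "\<dots> = 0" using s1 s2 by (metis add_left_cancel diff_self)
  finally have ys: "sum y J = 0" .
  have yg: "\<forall>j\<in>J. y j \<in> gr (\<phi> j)" using insert.prems sub_gr unfolding y_def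
    by (simp add: subspace_scale)
  have "\<forall>j\<in>J. y j = 0" using insert.IH[OF _ yg ys] insert.prems by auto
  then have xJ: "\<forall>j\<in>J. x j = 0" using insert.prems insert.hyps
    by (auto simp: y_def inj_on_def)
  then have "sum x J = 0" by simp
  then show ?case using sum0 xJ by simp
qed

lemma finB: "\<exists>B. finite B \<and> span B = UNIV" using lsa unfolding lie_superalgebra_def by blast

definition NZ :: "int set" where "NZ = {j. \<exists>v\<in>gr j. v \<noteq> 0}"

lemma NZ_finite: "finite NZ"
proof (rule ccontr)
  assume inf: "infinite NZ"
  obtain B where B: "finite B" "span B = UNIV" using finB by blast
  obtain S where S: "S \<subseteq> NZ" "finite S" "card S = Suc (card B)"
    using infinite_arbitrarily_large[OF inf] by blast
  define v where "v j = (SOME w. w \<in> gr j \<and> w \<noteq> 0)" for j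
  have v: "v j \<in> gr j \<and> v j \<noteq> 0" if "j \<in> NZ" for j
    using that unfolding v_def NZ_def by (metis (mono_tags, lifting) mem_Collect_eq someI_ex)
  have inj: "inj_on v S"
  proof (rule inj_onI)
    fix a b assume ab: "a \<in> S" "b \<in> S" "v a = v b"
    have aN: "a \<in> NZ" and bN: "b \<in> NZ" using ab S(1) by auto
    have e1: "br H (v a) = sc (of_int a) (v a)" using v[OF aN] gr_iff by blast
    have e2: "br H (v a) = sc (of_int b) (v a)" using v[OF bN] gr_iff ab(3) by metis
    have "sc (of_int a) (v a) = sc (of_int b) (v a)" by (rule trans[OF e1[symmetric] e2])
    then have "(of_int a :: complex) = of_int b" using v[OF aN] scale_cancel_right by blast
    then show "a = b" by simp
  qed
  have ind: "independent (v ` S)"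
  proof (rule independent_if_scalars_zero)
    show "finite (v ` S)" using S by simp
  next
    fix u x assume sum: "(\<Sum>x\<in>v ` S. sc (u x) x) = 0" and x: "x \<in> v ` S"
    have "(\<Sum>j\<in>S. sc (u (v j)) (v j)) = 0" using sum by (simp add: sum.reindex[OF inj])
    moreover have "\<forall>j\<in>S. sc (u (v j)) (v j) \<in> gr (id j)" using v S(1) sub_gr
      by (auto intro: subspace_scale)
    ultimately have "\<forall>j\<in>S. sc (u (v j)) (v j) = 0" using indepA[OF S(2), of id "\<lambda>j. sc (u (v j)) (v j)"] by simp
    then show "u x = 0" using x v S(1) by auto
  qed
  have "card (v ` S) \<le> card B" using independent_span_bound[OF B(1) ind] B(2) by auto
  then show False using S card_image[OF inj] by simp
qed

lemma lowbound: "\<exists>M. \<forall>j<M. \<forall>v\<in>gr j. v = 0"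
proof -
  define M where "M = Min (insert 0 NZ)"
  have "\<forall>j\<in>NZ. M \<le> j" unfolding M_def using NZ_finite by simp
  then have "\<forall>j<M. j \<notin> NZ" by fastforce
  then show ?thesis unfolding NZ_def by blast
qed

lemma Fpow_gr: "v \<in> gr m \<Longrightarrow> ((br f) ^^ k) v \<in> gr (m - 2 * int k)"
proof (induction k)
  case 0 then show ?case by simp
next
  case (Suc k)
  then have "br f (((br f) ^^ k) v) \<in> gr (m - 2 * int k - 2)" using F_gr by blast
  then show ?case by (simp add: algebra_simps)
qed

lemma F_nil: assumes "v \<in> gr m" shows "\<exists>k. ((br f) ^^ k) v = 0"
proof -
  obtain M where M: "\<forall>j<M. \<forall>v\<in>gr j. v = 0" using lowbound by blast
  define k where "k = nat (m - M) + 1"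
  have "int (nat (m - M)) \<ge> m - M" by simp
  moreover have "int k = int (nat (m - M)) + 1" by (simp add: k_def)
  ultimately have "m - 2 * int k < M" by linarith
  then show ?thesis using M Fpow_gr[OF assms, of k] by blast
qed

lemma chain:
  assumes hu: "br h u = sc (-2) u" and feu: "br f (br e u) = 0" and ug: "u \<in> gr m"
  shows "u = 0"
proof -
  have hk: "br h (((br f) ^^ k) u) = sc (- 2 - 2 * of_nat k) (((br f) ^^ k) u)" for k
  proof (induction k)
    case 0 then show ?case using hu by simp
  next
    case (Suc k)
    have c: "(-2 :: complex) + (- 2 - 2 * of_nat k) = - 2 - 2 * of_nat (Suc k)" by simp
    have "br h (((br f) ^^ Suc k) u) = sc (-2) (br f (((br f) ^^ k) u)) + sc (- 2 - 2 * of_nat k) (br f (((br f) ^^ k) u))"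
      by (simp only: funpow.simps comp_def HhF Suc br_scR)
    also have "\<dots> = sc (- 2 - 2 * of_nat (Suc k)) (((br f) ^^ Suc k) u)"
      by (simp only: scale_left_distrib[symmetric] c funpow.simps comp_def)
    finally show ?case .
  qed
  have ek: "br e (((br f) ^^ Suc k) u) = sc (- (of_nat k + 1) * (of_nat k + 2)) (((br f) ^^ k) u)" for k
  proof (induction k)
    case 0 then show ?case using hu feu by (simp add: EF)
  next
    case (Suc k)
    have c: "(- 2 - 2 * of_nat (Suc k)) + (- (of_nat k + 1) * (of_nat k + 2)) = (- (of_nat (Suc k) + 1) * (of_nat (Suc k) + 2) :: complex)"
      by (simp add: algebra_simps)
    have "br e (((br f) ^^ Suc (Suc k)) u) = br e (br f (((br f) ^^ Suc k) u))" by simp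
    also have "\<dots> = br h (((br f) ^^ Suc k) u) + br f (br e (((br f) ^^ Suc k) u))" by (rule EF)
    also have "\<dots> = sc (- 2 - 2 * of_nat (Suc k)) (((br f) ^^ Suc k) u)
        + sc (- (of_nat k + 1) * (of_nat k + 2)) (((br f) ^^ Suc k) u)"
      by (simp only: hk Suc br_scR) (simp only: funpow.simps comp_def)
    also have "\<dots> = sc (- (of_nat (Suc k) + 1) * (of_nat (Suc k) + 2)) (((br f) ^^ Suc k) u)"
      by (simp only: scale_left_distrib[symmetric] c)
    finally show ?case .
  qed
  have "((br f) ^^ k) u = 0 \<Longrightarrow> u = 0" for k
  proof (induction k)
    case 0 then show ?case by simp
  next
    case (Suc k)
    have "sc (- (of_nat k + 1) * (of_nat k + 2)) (((br f) ^^ k) u) = 0"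
      using ek[of k] Suc.prems by simp
    moreover have "(- (of_nat k + 1) * (of_nat k + 2) :: complex) \<noteq> 0"
    proof -
      have "(of_nat k + 1 :: complex) = of_nat (k+1)" "(of_nat k + 2::complex) = of_nat (k+2)" by simp_all
      then show ?thesis by (simp only: neg_equal_0_iff_equal mult_eq_0_iff of_nat_eq_0_iff) simp
    qed
    ultimately show ?case using Suc.IH by simp
  qed
  then show ?thesis using F_nil[OF ug] by blast
qed

lemma decomp: "\<exists>x. (\<forall>j. x j \<in> gr j) \<and> v = sum x NZ"
proof -
  define S where "S = {v. \<exists>x. (\<forall>j. x j \<in> gr j) \<and> v = sum x NZ}"
  have subS: "subspace S"
  proof (rule subspaceI)
    show "0 \<in> S" unfolding S_def
      by (rule CollectI, rule exI[of _ "\<lambda>_. 0"]) (simp add: subspace_0[OF sub_gr])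
  next
    fix a b assume "a \<in> S" "b \<in> S"
    then obtain xa xb where "\<forall>j. xa j \<in> gr j" "a = sum xa NZ" "\<forall>j. xb j \<in> gr j" "b = sum xb NZ"
      unfolding S_def by blast
    then show "a + b \<in> S" unfolding S_def
      by (intro CollectI exI[of _ "\<lambda>j. xa j + xb j"]) (simp add: subspace_add[OF sub_gr] sum.distrib)
  next
    fix c a assume "a \<in> S"
    then obtain xa where "\<forall>j. xa j \<in> gr j" "a = sum xa NZ"
      unfolding S_def by blast
    then show "sc c a \<in> S" unfolding S_def
      by (intro CollectI exI[of _ "\<lambda>j. sc c (xa j)"]) (simp add: subspace_scale[OF sub_gr] scale_sum_right)
  qed
  have "(\<Union>j. gr j) \<subseteq> S"
  proof
    fix w assume "w \<in> (\<Union>j. gr j)"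
    then obtain j0 where w: "w \<in> gr j0" by blast
    show "w \<in> S"
    proof (cases "w = 0")
      case True then show ?thesis using subspace_0[OF subS] by simp
    next
      case False
      then have j0: "j0 \<in> NZ" using w unfolding NZ_def by blast
      show ?thesis unfolding S_def
      proof (intro CollectI exI[of _ "\<lambda>j. if j = j0 then w else 0"] conjI allI)
        fix j show "(if j = j0 then w else 0) \<in> gr j" using w subspace_0[OF sub_gr] by simp
      next
        show "w = (\<Sum>j\<in>NZ. if j = j0 then w else 0)" using j0 NZ_finite by simp
      qed
    qed
  qed
  then have "span (\<Union>j. gr j) \<subseteq> S" using subS by (rule span_minimal)
  moreover have "span (\<Union>j. gr j) = UNIV" using grading unfolding Z_grading_by_def by blast
  ultimately have "v \<in> S" by blast
  then show ?thesis unfolding S_def by blast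
qed

lemma inj_surj:
  assumes W: "subspace W" and lin: "Vector_Spaces.linear sc sc g" and into: "g ` W \<subseteq> W" and inj: "inj_on g W"
  shows "g ` W = W"
proof -
  obtain B where B: "finite B" "span B = UNIV" using finB by blast
  obtain Bs where Bs: "independent Bs" "UNIV \<subseteq> span Bs" using basis_exists[of UNIV] by blast
  have fBs: "finite Bs" using independent_span_bound[OF B(1) Bs(1)] B(2) by auto
  interpret fd: finite_dimensional_vector_space sc Bs
    by unfold_locales (use fBs Bs in auto)
  interpret fdp: finite_dimensional_vector_space_pair_1 sc Bs sc ..
  have spW: "span W = W" using W by (simp add: span_eq_iff)
  have d: "dim (g ` W) = dim W" using fdp.dim_image_eq[OF lin, of W] inj spW by simp
  have subI: "subspace (g ` W)"
  proof (rule subspaceI)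
    have "g 0 = 0" using lin by (simp add: Vector_Spaces.linear_iff) (metis add_cancel_right_right)
    then show "0 \<in> g ` W" using subspace_0[OF W] by force
  next
    fix a b assume "a \<in> g ` W" "b \<in> g ` W"
    then obtain a' b' where "a' \<in> W" "b' \<in> W" "a = g a'" "b = g b'" by blast
    then show "a + b \<in> g ` W" using lin subspace_add[OF W] unfolding Vector_Spaces.linear_iff
      by (metis image_eqI)
  next
    fix c a assume "a \<in> g ` W"
    then obtain a' where "a' \<in> W" "a = g a'" by blast
    then show "sc c a \<in> g ` W" using lin subspace_scale[OF W] unfolding Vector_Spaces.linear_iff
      by (metis image_eqI)
  qed
  show ?thesis using fd.subspace_dim_equal[OF subI W into] d by simp
qed

definition phi :: "'a \<Rightarrow> 'a" where "phi v = br h v + sc 2 v"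

lemma phi_lin: "Vector_Spaces.linear sc sc phi"
  unfolding Vector_Spaces.linear_iff phi_def using vector_space_axioms
  by (simp add: br_addR br_scR scale_right_distrib scale_scale mult.commute)

lemma phi_diff: "phi (a - b) = phi a - phi b"
  unfolding phi_def by (simp add: br_diffR scale_right_diff_distrib)

lemma key:
  assumes v: "v \<in> gr j" and j: "j \<ge> 1" and fv: "br f v = 0" and hv: "br h v = 0"
  shows "v = 0"
proof -
  have "br e ` gr (j - 2) = gr (j - 2 + 2)" using good j unfolding good_element_def by simp
  then have "v \<in> br e ` gr (j - 2)" using v by simp
  then obtain w where w: "w \<in> gr (j - 2)" "br e w = v" by (metis imageE)
  define W where "W = {u. br e u = 0} \<inter> gr (j - 2)"
  have subK: "subspace {u. br e u = 0}"
    by (rule subspaceI) (auto simp: br_addR br_scR)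
  have subW: "subspace W" unfolding W_def by (rule subspace_inter[OF subK sub_gr])
  have Ephi: "br e (phi u) = br h (br e u)" for u
    using HhE[of u] by (simp add: phi_def br_addR br_scR algebra_simps)
  have phi_gr: "u \<in> gr m \<Longrightarrow> phi u \<in> gr m" for u m
    unfolding phi_def by (intro subspace_add[OF sub_gr] subspace_scale[OF sub_gr] Hh_gr)
  have into: "phi ` W \<subseteq> W" unfolding W_def using Ephi phi_gr by auto
  have phi0: "u = 0" if "u \<in> gr m" "phi u = 0" "br e u = 0" for u m
  proof (rule chain)
    show "br h u = sc (-2) u" using that(2) unfolding phi_def by (simp add: add_eq_0_iff)
    show "br f (br e u) = 0" using that(3) by simp
    show "u \<in> gr m" by fact
  qed
  have inj: "inj_on phi W"
  proof (rule inj_onI)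
    fix a b assume ab: "a \<in> W" "b \<in> W" "phi a = phi b"
    have "phi (a - b) = 0" using ab(3) phi_diff by simp
    moreover have "a - b \<in> W" using subspace_diff[OF subW] ab by blast
    ultimately have "a - b = 0" using phi0 unfolding W_def by blast
    then show "a = b" by simp
  qed
  have uW: "phi w \<in> W" unfolding W_def using Ephi[of w] w hv phi_gr by auto
  obtain u' where u': "u' \<in> W" "phi u' = phi w"
    using inj_surj[OF subW phi_lin into inj] uW by (metis imageE)
  define w' where "w' = w - u'"
  have pw: "phi w' = 0" unfolding w'_def using u'(2) phi_diff by simp
  have ew': "br e w' = v" unfolding w'_def using u'(1) w(2) by (simp add: W_def br_diffR)
  have gw': "w' \<in> gr (j - 2)" unfolding w'_def using u'(1) w(1) subspace_diff[OF sub_gr]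
    by (auto simp: W_def)
  have hw: "br h w' = sc (-2) w'" using pw unfolding phi_def by (simp add: add_eq_0_iff)
  have "w' = 0" by (rule chain[OF hw _ gw']) (simp add: ew' fv)
  then show ?thesis using ew' by simp
qed

lemma cent_gr0:
  assumes y: "y \<in> centralizer_s br e f h"
  shows "br H y = 0"
proof -
  have ey: "br e y = 0" using y anti[OF e0, of y] unfolding centralizer_s_def by simp
  have fy: "br f y = 0" using y anti[OF f0, of y] unfolding centralizer_s_def by simp
  have hy: "br h y = 0" using y anti[OF h0, of y] unfolding centralizer_s_def by simp
  obtain x where x: "\<forall>j. x j \<in> gr j" "y = sum x NZ" using decomp by blast
  have xe: "\<forall>j\<in>NZ. br e (x j) = 0"
    using indepA[OF NZ_finite, of "\<lambda>j. j + 2" "\<lambda>j. br e (x j)"] x E_gr ey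
    by (simp add: br_sumR inj_on_def)
  have xf: "\<forall>j\<in>NZ. br f (x j) = 0"
    using indepA[OF NZ_finite, of "\<lambda>j. j - 2" "\<lambda>j. br f (x j)"] x F_gr fy
    by (simp add: br_sumR inj_on_def)
  have xh: "\<forall>j\<in>NZ. br h (x j) = 0"
    using indepA[OF NZ_finite, of "\<lambda>j. j" "\<lambda>j. br h (x j)"] x Hh_gr hy
    by (simp add: br_sumR inj_on_def)
  have xz: "sc (of_int j) (x j) = 0" if jN: "j \<in> NZ" for j
  proof (cases "j = 0")
    case True then show ?thesis by simp
  next
    case False
    show ?thesis
    proof (cases "j \<le> -1")
      case True
      then have "inj_on (br e) (gr j)" using good unfolding good_element_def by blast
      moreover have "br e (x j) = br e 0" using xe jN by simp
      ultimately have "x j = 0" using x(1) subspace_0[OF sub_gr] by (meson inj_onD)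
      then show ?thesis by simp
    next
      case False
      then have "j \<ge> 1" using \<open>j \<noteq> 0\<close> by linarith
      then have "x j = 0" using key[of "x j" j] x(1) xf xh jN by blast
      then show ?thesis by simp
    qed
  qed
  have "br H y = (\<Sum>j\<in>NZ. br H (x j))" using x(2) by (simp add: br_sumR)
  also have "\<dots> = (\<Sum>j\<in>NZ. sc (of_int j) (x j))" using x(1) by (simp add: gr_iff)
  also have "\<dots> = 0" by (rule sum.neutral) (use xz in blast)
  finally show ?thesis .
qed

lemma self_zero: assumes u: "u \<in> G0" shows "br u u = 0"
proof -
  have "br u u = - br u u" using anti[OF u, of u] .
  then have "br u u + br u u = 0" by (simp only: eq_neg_iff_add_eq_0)
  then have "sc 2 (br u u) = 0" using scale_left_distrib[of 1 1 "br u u"] by simp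
  then show ?thesis by simp
qed

lemma main:
  shows "H - h \<in> center_of br (centralizer_s br e f h) \<inter> G0
       \<and> (center_of br (centralizer_s br e f h) \<inter> G0 = {0} \<longrightarrow> H = h)"
proof -
  have zG: "H - h \<in> G0" using subspace_diff[OF sub0 H0 h0] .
  have zc: "H - h \<in> centralizer_s br e f h"
    unfolding centralizer_s_def
    using He he Hf hf Hh self_zero[OF h0] by (simp add: br_diffL)
  have "br (H - h) y = 0" if "y \<in> centralizer_s br e f h" for y
    using cent_gr0[OF that] that anti[OF h0, of y] unfolding centralizer_s_def
    by (simp add: br_diffL)
  then have zz: "H - h \<in> center_of br (centralizer_s br e f h)"
    using zc unfolding center_of_def by blast
  have "center_of br (centralizer_s br e f h) \<inter> G0 = {0} \<longrightarrow> H = h"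
  proof
    assume "center_of br (centralizer_s br e f h) \<inter> G0 = {0}"
    then have "H - h = 0" using zz zG by blast
    then show "H = h" by simp
  qed
  then show ?thesis by (intro conjI IntI zz zG)
qed


end

theorem mainTheorem7:
  fixes sc :: "complex \<Rightarrow> 'a::ab_group_add \<Rightarrow> 'a"
    and br :: "'a \<Rightarrow> 'a \<Rightarrow> 'a"
    and G0 G1 :: "'a set"
    and H e f h :: 'a
  assumes lsa: "lie_superalgebra sc br G0 G1"
    and cases: "(basic_lsa sc br G0 G1 \<and> (\<forall>n. \<not> iso_psl sc br G0 G1 n))
              \<or> ((\<exists>m n. iso_gl sc br G0 G1 m n) \<and> center_even br G0 \<subseteq> grade_sp sc br H 0)"
    and grading: "Z_grading_by sc br G0 H"
    and good: "good_element sc br G0 H e"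
    and triple: "sl2_triple sc br e f h"
    and f_in: "f \<in> derived_even sc br G0 \<inter> grade_sp sc br H (-2)"
    and h_in: "h \<in> derived_even sc br G0 \<inter> grade_sp sc br H 0"
  shows "H - h \<in> center_of br (centralizer_s br e f h) \<inter> G0
       \<and> (center_of br (centralizer_s br e f h) \<inter> G0 = {0} \<longrightarrow> H = h)"
proof -
  have vs: "vector_space sc" using lsa unfolding lie_superalgebra_def by blast
  interpret LS sc br G0 G1 H e f h
    by (rule LS.intro[OF vs LS_axioms.intro[OF lsa grading good triple f_in h_in]])
  show ?thesis by (rule main)
qed

end
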